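(* Let $(G,u)$ be a countable unperforated partially ordered abelian group with order unit $u$. Then $\{\tau\in S(G,u):\ker\tau=\mathrm{Inf}(G)\}$ is a dense $G_\delta$ subset of $S(G,u)$.
   Context: $u$ is an order unit: for every $g\in G$ there is $n\in\mathbb Z^+$ with $nu-g\ge0$. Unperforated: $ng\ge0$ for some $n\in\mathbb N$ implies $g\ge0$. A state is a homomorphism $\tau:G\to\mathbb R$ with $\tau(G^+)\ge0$ and $\tau(u)=1$; $S(G,u)$ is the set of states with the topology of pointwise convergence (a compact convex subset of $\mathbb R^G$). $\mathrm{Inf}(G)=\{g\in G:-\epsilon u\le g\le\epsilon u\text{ for all rational }\epsilon>0\}$. *)

theory Defs
  imports "HOL-Analysis.Analysis"
begin

primrec natmul :: "nat \<Rightarrow> 'a::ab_group_add \<Rightarrow> 'a" where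
  "natmul 0 g = 0"
| "natmul (Suc n) g = g + natmul n g"

definition order_unit :: "'a::ordered_ab_group_add \<Rightarrow> bool" where
  "order_unit u \<longleftrightarrow> (\<forall>g. \<exists>n::nat. n > 0 \<and> natmul n u - g \<ge> 0)"

definition unperforated :: "'a::ordered_ab_group_add itself \<Rightarrow> bool" where
  "unperforated _ \<longleftrightarrow> (\<forall>(g::'a) (n::nat). n > 0 \<and> natmul n g \<ge> 0 \<longrightarrow> g \<ge> 0)"

definition states :: "'a::ordered_ab_group_add \<Rightarrow> ('a \<Rightarrow> real) set" where
  "states u = {\<tau>. (\<forall>x y. \<tau> (x + y) = \<tau> x + \<tau> y) \<and> (\<forall>g. 0 \<le> g \<longrightarrow> 0 \<le> \<tau> g) \<and> \<tau> u = 1}"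

text \<open>Infinitesimals: -\<epsilon>u \<le> g \<le> \<epsilon>u for all rational \<epsilon> = p/q > 0,
  i.e. -(p u) \<le> q g \<le> p u for all positive integers p, q.\<close>
definition infinitesimals :: "'a::ordered_ab_group_add \<Rightarrow> 'a set" where
  "infinitesimals u = {g. \<forall>p q::nat. p > 0 \<and> q > 0 \<longrightarrow>
      - natmul p u \<le> natmul q g \<and> natmul q g \<le> natmul p u}"

end

theory Submission
  imports Defs
begin


lemma natmul_add_count: "natmul (m+n) g = natmul m g + natmul n (g::'a::ab_group_add)"
  by (induction m) (auto simp: add.assoc)

lemma natmul_add: "natmul n (a+b) = natmul n a + natmul n (b::'a::ab_group_add)"
  by (induction n) (auto simp: algebra_simps)

lemma natmul_zero[simp]: "natmul n (0::'a::ab_group_add) = 0"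
  by (induction n) auto

lemma natmul_minus: "natmul n (-a) = - natmul n (a::'a::ab_group_add)"
  by (induction n) (auto simp: algebra_simps)

lemma natmul_diff: "natmul n (a-b) = natmul n a - natmul n (b::'a::ab_group_add)"
  unfolding diff_conv_add_uminus by (simp only: natmul_add natmul_minus)

lemma natmul_mult: "natmul (m*n) g = natmul m (natmul n (g::'a::ab_group_add))"
  by (induction m) (auto simp: natmul_add_count natmul_add)

lemma natmul_comm: "natmul m (natmul n g) = natmul n (natmul m (g::'a::ab_group_add))"
  by (metis natmul_mult mult.commute)

lemma natmul_one[simp]: "natmul (Suc 0) g = g"
  by simp

lemma natmul_mono: "a \<le> b \<Longrightarrow> natmul n a \<le> natmul n (b::'a::ordered_ab_group_add)"
  by (induction n) (auto intro: add_mono)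

lemma natmul_nonneg: "0 \<le> a \<Longrightarrow> 0 \<le> natmul n (a::'a::ordered_ab_group_add)"
  using natmul_mono[of 0 a n] by simp

lemma natmul_mono_count: "0 \<le> a \<Longrightarrow> m \<le> n \<Longrightarrow> natmul m a \<le> natmul n (a::'a::ordered_ab_group_add)"
proof -
  assume "0 \<le> a" "m \<le> n"
  then obtain k where "n = k + m" by (metis le_add_diff_inverse2)
  then show ?thesis using natmul_nonneg[OF \<open>0 \<le> a\<close>, of k] by (simp add: natmul_add_count)
qed

lemma additive_natmul:
  assumes "\<forall>x y. f (x+y) = f x + (f y::real)"
  shows "f (natmul n (g::'a::ab_group_add)) = real n * f g"
proof -
  have f0: "f 0 = 0" using assms[rule_format, of 0 0] by simp
  show ?thesis by (induction n) (auto simp: f0 assms algebra_simps)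
qed

lemma additive_minus:
  assumes "\<forall>x y. f (x+y) = f x + (f y::real)"
  shows "f (- (g::'a::ab_group_add)) = - f g"
proof -
  have f0: "f 0 = 0" using assms[rule_format, of 0 0] by simp
  show ?thesis using assms[rule_format, of g "-g"] f0 by simp
qed


definition subl :: "('a::ab_group_add \<Rightarrow> real) \<Rightarrow> bool" where
  "subl q \<longleftrightarrow> (\<forall>x y. q (x+y) \<le> q x + q y) \<and> (\<forall>n x. q (natmul n x) = real n * q x)"

definition Tv :: "('a::ab_group_add \<Rightarrow> real) \<Rightarrow> 'a \<Rightarrow> 'a \<Rightarrow> nat \<Rightarrow> nat \<Rightarrow> real" where
  "Tv q x y m t = (q (natmul m y + natmul t x) - real t * q x) / real m"

definition step :: "('a::ab_group_add \<Rightarrow> real) \<Rightarrow> 'a \<Rightarrow> 'a \<Rightarrow> real" where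
  "step q x y = Inf {Tv q x y m t | m t. 0 < m}"

lemma subl_add: "subl q \<Longrightarrow> q (x+y) \<le> q x + q y" by (simp add: subl_def)
lemma subl_hom: "subl q \<Longrightarrow> q (natmul n x) = real n * q x" by (simp add: subl_def)

lemma subl_zero: "subl q \<Longrightarrow> q 0 = 0"
  using subl_hom[of q 0 0] by simp

lemma subl_neg: "subl q \<Longrightarrow> 0 \<le> q y + q (-y)"
  using subl_add[of q y "-y"] subl_zero[of q] by simp

lemma Tv_lower:
  assumes q: "subl q" and m: "0 < m"
  shows "- q (-y) \<le> Tv q x y m t"
proof -
  have e: "natmul t x = (natmul m y + natmul t x) + natmul m (-y)"
    by (simp add: natmul_minus)
  have "q (natmul t x) \<le> q (natmul m y + natmul t x) + q (natmul m (-y))"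
    using subl_add[OF q] by (subst e) simp
  then have "real t * q x \<le> q (natmul m y + natmul t x) + real m * q (-y)"
    using subl_hom[OF q] by simp
  then have "real m * (- q (-y)) \<le> q (natmul m y + natmul t x) - real t * q x"
    by (simp add: algebra_simps)
  then show ?thesis using m by (simp add: Tv_def pos_le_divide_eq mult.commute)
qed

lemma step_set_ne: "{Tv q x y m t | m t. 0 < m} \<noteq> {}" by auto

lemma step_set_bdd: "subl q \<Longrightarrow> bdd_below {Tv q x y m t | m t. 0 < m}"
  unfolding bdd_below_def using Tv_lower by blast

lemma step_le_Tv: "subl q \<Longrightarrow> 0 < m \<Longrightarrow> step q x y \<le> Tv q x y m t"
  unfolding step_def by (rule cInf_lower) (use step_set_bdd[of q x y] in auto)

lemma step_greatest: "(\<And>m t. 0 < m \<Longrightarrow> c \<le> Tv q x y m t) \<Longrightarrow> c \<le> step q x y"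
  unfolding step_def by (rule cInf_greatest) auto

lemma step_ge: "subl q \<Longrightarrow> - q (-y) \<le> step q x y"
  by (rule step_greatest) (rule Tv_lower)

lemma step_le: "subl q \<Longrightarrow> step q x y \<le> q y"
  using step_le_Tv[of q 1 x y 0] by (simp add: Tv_def)

lemma step_neg: "subl q \<Longrightarrow> step q x (-x) \<le> - q x"
  using step_le_Tv[of q 1 x "-x" 1] by (simp add: Tv_def subl_zero)

lemma step_sub_pair:
  assumes q: "subl q" and m1: "0 < m1" and m2: "0 < m2"
  shows "step q x (y1+y2) \<le> Tv q x y1 m1 t1 + Tv q x y2 m2 t2"
proof -
  let ?A1 = "natmul m1 y1 + natmul t1 x" and ?A2 = "natmul m2 y2 + natmul t2 x"
  have e: "natmul (m1*m2) (y1+y2) + natmul (t1*m2 + t2*m1) x = natmul m2 ?A1 + natmul m1 ?A2"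
    by (simp add: natmul_add natmul_add_count natmul_mult natmul_comm[of m1 m2] algebra_simps)
  have "q (natmul m2 ?A1 + natmul m1 ?A2) \<le> real m2 * q ?A1 + real m1 * q ?A2"
    using subl_add[OF q, of "natmul m2 ?A1" "natmul m1 ?A2"] subl_hom[OF q] by simp
  then have "Tv q x (y1+y2) (m1*m2) (t1*m2 + t2*m1) \<le> Tv q x y1 m1 t1 + Tv q x y2 m2 t2"
    using m1 m2 unfolding Tv_def e
    by (simp add: field_simps)
  moreover have "step q x (y1+y2) \<le> Tv q x (y1+y2) (m1*m2) (t1*m2 + t2*m1)"
    using step_le_Tv[OF q] m1 m2 by simp
  ultimately show ?thesis by linarith
qed

lemma step_subadd:
  assumes q: "subl q"
  shows "step q x (y1+y2) \<le> step q x y1 + step q x y2"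
proof -
  have "step q x (y1+y2) - step q x y1 \<le> Tv q x y2 m2 t2" if m2: "0<m2" for m2 t2
  proof -
    have "step q x (y1+y2) - Tv q x y2 m2 t2 \<le> step q x y1"
    proof (rule step_greatest)
      fix m t :: nat assume m: "0<m"
      have "step q x (y1+y2) \<le> Tv q x y1 m t + Tv q x y2 m2 t2"
        by (rule step_sub_pair[OF q m m2])
      then show "step q x (y1+y2) - Tv q x y2 m2 t2 \<le> Tv q x y1 m t" by linarith
    qed
    then show ?thesis by linarith
  qed
  then have "step q x (y1+y2) - step q x y1 \<le> step q x y2"
    by (rule step_greatest)
  then show ?thesis by linarith
qed

lemma step_hom:
  assumes q: "subl q"
  shows "step q x (natmul n y) = real n * step q x y"
proof (cases "n = 0")
  case True
  have "step q x 0 \<le> 0" using step_le[OF q, of x 0] subl_zero[OF q] by simp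
  moreover have "0 \<le> step q x 0" using step_ge[OF q, of 0 x] subl_zero[OF q] by simp
  ultimately show ?thesis using True by simp
next
  case False
  then have n: "0 < n" by simp
  have "step q x (natmul n y) / real n \<le> step q x y"
  proof (rule step_greatest)
    fix m t :: nat assume m: "0 < m"
    have "step q x (natmul n y) \<le> Tv q x (natmul n y) m (n*t)"
      using step_le_Tv[OF q m] .
    also have "\<dots> = real n * Tv q x y m t"
    proof -
      have "natmul m (natmul n y) + natmul (n*t) x = natmul n (natmul m y + natmul t x)"
        by (simp add: natmul_add natmul_mult natmul_comm[of m n])
      then show ?thesis using subl_hom[OF q] by (simp add: Tv_def algebra_simps)
    qed
    finally show "step q x (natmul n y) / real n \<le> Tv q x y m t"
      using n by (simp add: divide_le_eq mult.commute)
  qed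
  moreover have "real n * step q x y \<le> step q x (natmul n y)"
  proof (rule step_greatest)
    fix m t :: nat assume m: "0 < m"
    have "step q x y \<le> Tv q x y (m*n) t"
      using step_le_Tv[OF q] m n by simp
    also have "\<dots> = Tv q x (natmul n y) m t / real n"
      using n by (simp add: Tv_def natmul_mult)
    finally show "real n * step q x y \<le> Tv q x (natmul n y) m t"
      using n by (simp add: le_divide_eq mult.commute)
  qed
  ultimately show ?thesis using n by (simp add: divide_le_eq mult.commute)
qed

lemma step_subl: "subl q \<Longrightarrow> subl (step q x)"
  unfolding subl_def[of "step q x"] using step_subadd step_hom by blast


primrec Qs :: "('a::ab_group_add \<Rightarrow> real) \<Rightarrow> (nat \<Rightarrow> 'a) \<Rightarrow> nat \<Rightarrow> 'a \<Rightarrow> real" where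
  "Qs q0 xs 0 = q0"
| "Qs q0 xs (Suc n) = step (Qs q0 xs n) (xs n)"

lemma Qs_subl: "subl q0 \<Longrightarrow> subl (Qs q0 xs n)"
  by (induction n) (auto intro: step_subl)

lemma Qs_dec: assumes q: "subl q0" and mn: "m \<le> n" shows "Qs q0 xs n y \<le> Qs q0 xs m y"
  using mn
proof (induction n rule: dec_induct)
  case base then show ?case by simp
next
  case (step n)
  then show ?case using step_le[OF Qs_subl[OF q], of xs n "xs n" y] by simp
qed

lemma Qs_lower: "subl q0 \<Longrightarrow> - q0 (-y) \<le> Qs q0 xs n y"
proof -
  assume q: "subl q0"
  have "0 \<le> Qs q0 xs n y + Qs q0 xs n (-y)" using subl_neg[OF Qs_subl[OF q]] .
  moreover have "Qs q0 xs n (-y) \<le> q0 (-y)" using Qs_dec[OF q, of 0 n xs "-y"] by simp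
  ultimately show ?thesis by linarith
qed

lemma Qs_bdd: "subl q0 \<Longrightarrow> bdd_below (range (\<lambda>n. Qs q0 (xs::nat\<Rightarrow>'a::ab_group_add) n y))"
  unfolding bdd_below_def using Qs_lower by blast

lemma HB_aux:
  fixes q0 :: "'a::ab_group_add \<Rightarrow> real" and xs :: "nat \<Rightarrow> 'a"
  assumes q: "subl q0" and surj: "surj xs"
  shows "\<exists>\<sigma>. (\<forall>x y. \<sigma> (x+y) = \<sigma> x + \<sigma> y) \<and> (\<forall>y. \<sigma> y \<le> q0 y) \<and> \<sigma> (xs 0) = q0 (xs 0)"
proof -
  define \<sigma> where "\<sigma> y = (INF n. Qs q0 xs n y)" for y
  have le: "\<sigma> y \<le> Qs q0 xs n y" for y n
    unfolding \<sigma>_def by (rule cINF_lower[OF Qs_bdd[OF q]]) simp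
  have ge: "- q0 (-y) \<le> \<sigma> y" for y
    unfolding \<sigma>_def by (rule cINF_greatest) (auto intro: Qs_lower[OF q])
  have approx: "\<exists>n. Qs q0 xs n y < \<sigma> y + e" if "e > 0" for y e
  proof -
    have "(INF n. Qs q0 xs n y) < \<sigma> y + e" using that by (simp add: \<sigma>_def)
    then show ?thesis by (subst (asm) cINF_less_iff[OF _ Qs_bdd[OF q]]) auto
  qed
  have sub: "\<sigma> (a+b) \<le> \<sigma> a + \<sigma> b" for a b
  proof (rule ccontr)
    assume nt: "\<not> ?thesis"
    define e where "e = (\<sigma> (a+b) - \<sigma> a - \<sigma> b) / 2"
    have e: "e > 0" using nt by (simp add: e_def)
    obtain n1 where n1: "Qs q0 xs n1 a < \<sigma> a + e" using approx[OF e] by blast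
    obtain n2 where n2: "Qs q0 xs n2 b < \<sigma> b + e" using approx[OF e] by blast
    define n where "n = max n1 n2"
    have "Qs q0 xs n a \<le> Qs q0 xs n1 a" "Qs q0 xs n b \<le> Qs q0 xs n2 b"
      using Qs_dec[OF q] by (auto simp: n_def)
    moreover have "\<sigma> (a+b) \<le> Qs q0 xs n a + Qs q0 xs n b"
      using le[of "a+b" n] subl_add[OF Qs_subl[OF q]] by (meson order_trans)
    ultimately show False using n1 n2 unfolding e_def by argo
  qed
  have s0: "\<sigma> 0 = 0"
  proof -
    have "\<sigma> 0 \<le> 0" using le[of 0 0] subl_zero[OF q] by simp
    moreover have "0 \<le> \<sigma> 0" using ge[of 0] subl_zero[OF q] by simp
    ultimately show ?thesis by simp
  qed
  have neg1: "0 \<le> \<sigma> z + \<sigma> (-z)" for z using sub[of z "-z"] s0 by simp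
  have neg2: "\<sigma> (xs k) + \<sigma> (- xs k) \<le> 0" for k
  proof -
    have Qk: "subl (Qs q0 xs k)" using Qs_subl[OF q] .
    have "\<sigma> (xs k) \<le> Qs q0 xs k (xs k)"
      using le[of "xs k" "Suc k"] step_le[OF Qk, of "xs k" "xs k"] by simp
    moreover have "\<sigma> (- xs k) \<le> - Qs q0 xs k (xs k)"
      using le[of "- xs k" "Suc k"] step_neg[OF Qk, of "xs k"] by simp
    ultimately show ?thesis by linarith
  qed
  have neg: "\<sigma> (-z) = - \<sigma> z" for z
  proof -
    obtain k where "z = xs k" using surj by (metis surj_def)
    then show ?thesis using neg1[of z] neg2[of k] by simp
  qed
  have add: "\<sigma> (a+b) = \<sigma> a + \<sigma> b" for a b
  proof -
    have "\<sigma> (-a + -b) \<le> \<sigma> (-a) + \<sigma> (-b)" by (rule sub)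
    then have "- \<sigma> (a+b) \<le> - \<sigma> a - \<sigma> b" using neg[of "a+b"] neg[of a] neg[of b]
      by (simp add: add.commute)
    then show ?thesis using sub[of a b] by linarith
  qed
  have leq: "\<sigma> y \<le> q0 y" for y using le[of y 0] by simp
  have "\<sigma> (- xs 0) \<le> - q0 (xs 0)"
    using le[of "- xs 0" 1] step_neg[OF q, of "xs 0"] by simp
  then have "\<sigma> (xs 0) = q0 (xs 0)" using neg[of "xs 0"] leq[of "xs 0"] by linarith
  then show ?thesis using add leq by blast
qed

lemma HB:
  fixes q0 :: "'a::ab_group_add \<Rightarrow> real"
  assumes q: "subl q0" and c: "countable (UNIV :: 'a set)"
  shows "\<exists>\<sigma>. (\<forall>x y. \<sigma> (x+y) = \<sigma> x + \<sigma> y) \<and> (\<forall>y. \<sigma> y \<le> q0 y) \<and> \<sigma> w = q0 w"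
proof -
  define xs where "xs n = (case n of 0 \<Rightarrow> w | Suc k \<Rightarrow> from_nat_into (UNIV::'a set) k)" for n
  have "surj xs"
  proof -
    have "z \<in> range xs" for z
    proof -
      obtain k where "from_nat_into (UNIV::'a set) k = z"
        using range_from_nat_into[OF _ c] by (metis UNIV_I UNIV_not_empty imageE)
      then have "xs (Suc k) = z" by (simp add: xs_def)
      then show ?thesis by (metis rangeI)
    qed
    then show ?thesis by auto
  qed
  from HB_aux[OF q this] show ?thesis by (simp add: xs_def)
qed




locale pog =
  fixes u :: "'a::ordered_ab_group_add"
  assumes unp: "unperforated TYPE('a)" and ou: "order_unit u" and nz: "u \<noteq> 0"
begin

lemma unp_rule: "0 < n \<Longrightarrow> 0 \<le> natmul n (g::'a) \<Longrightarrow> 0 \<le> g"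
proof -
  assume "0 < n" "0 \<le> natmul n g"
  then show "0 \<le> g" using unp[unfolded unperforated_def, rule_format, of n g] by simp
qed

lemma ou_bound: "\<exists>N. g \<le> natmul N u"
proof -
  obtain n where "natmul n u - g \<ge> 0" using ou unfolding order_unit_def by blast
  then have "g \<le> natmul n u" by simp
  then show ?thesis by blast
qed

lemma u_nonneg: "0 \<le> u"
proof -
  obtain n where "0 < n" "natmul n u - 0 \<ge> 0" using ou unfolding order_unit_def by blast
  then show ?thesis using unp_rule[of n u] by simp
qed

lemma no_tors: "0 < m \<Longrightarrow> natmul m u \<le> 0 \<Longrightarrow> False"
proof -
  assume m: "0 < m" and le: "natmul m u \<le> 0"
  have "0 \<le> natmul m (-u)" using le by (simp add: natmul_minus)
  then have "0 \<le> -u" using unp_rule m by blast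
  then have "u \<le> 0" by simp
  then show False using u_nonneg nz by (simp add: antisym)
qed

lemma cancel: "natmul a u \<le> natmul b u \<Longrightarrow> a \<le> b"
proof (rule ccontr)
  assume le: "natmul a u \<le> natmul b u" and "\<not> a \<le> b"
  then have "a = (a - b) + b" "0 < a - b" by auto
  then have "natmul (a-b) u + natmul b u \<le> natmul b u" using le natmul_add_count by metis
  then have "natmul (a-b) u \<le> 0" by (simp add: add_le_same_cancel2)
  then show False using no_tors \<open>0 < a - b\<close> by blast
qed

definition Sset :: "'a \<Rightarrow> real set" where
  "Sset x = {(real k - real j) / real n | n j k. 0 < n \<and> natmul n x + natmul j u \<le> natmul k u}"

definition pf :: "'a \<Rightarrow> real" where
  "pf x = Inf (Sset x)"

lemma S_ne: "Sset x \<noteq> {}"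
proof -
  obtain N where "x \<le> natmul N u" using ou_bound by blast
  then have "(real N - real 0) / real (1::nat) \<in> Sset x" unfolding Sset_def
    by (intro CollectI exI[of _ 1] exI[of _ 0] exI[of _ N]) simp
  then show ?thesis by blast
qed

lemma S_bdd: "bdd_below (Sset x)"
proof -
  obtain M where M: "-x \<le> natmul M u" using ou_bound by blast
  have "- real M \<le> s" if "s \<in> Sset x" for s
  proof -
    obtain n j k where s: "s = (real k - real j) / real n" and n: "0 < n"
      and le: "natmul n x + natmul j u \<le> natmul k u"
      using \<open>s \<in> Sset x\<close> unfolding Sset_def by blast
    have "natmul n (-x) \<le> natmul (n*M) u" using natmul_mono[OF M] by (simp add: natmul_mult)
    then have "natmul n x + natmul j u + natmul n (-x) \<le> natmul k u + natmul (n*M) u"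
      using le by (rule add_mono[rotated])
    then have "natmul j u \<le> natmul k u + natmul (n*M) u"
      by (simp add: natmul_minus)
    then have "j \<le> k + n*M" using cancel by (simp add: natmul_add_count)
    then have "real j \<le> real k + real n * real M" by (metis of_nat_add of_nat_le_iff of_nat_mult)
    then show ?thesis using n s by (simp add: le_divide_eq algebra_simps)
  qed
  then show ?thesis unfolding bdd_below_def by blast
qed

lemma pf_le: "0 < n \<Longrightarrow> natmul n x + natmul j u \<le> natmul k u \<Longrightarrow> pf x \<le> (real k - real j) / real n"
  unfolding pf_def by (rule cInf_lower[OF _ S_bdd]) (auto simp: Sset_def)

lemma pf_greatest:
  "(\<And>n j k. 0 < n \<Longrightarrow> natmul n x + natmul j u \<le> natmul k u \<Longrightarrow> c \<le> (real k - real j) / real n)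
   \<Longrightarrow> c \<le> pf x"
  unfolding pf_def by (rule cInf_greatest[OF S_ne]) (auto simp: Sset_def)

lemma pf_less: "pf x < c \<Longrightarrow> \<exists>n j k. 0 < n \<and> natmul n x + natmul j u \<le> natmul k u \<and> (real k - real j) / real n < c"
  unfolding pf_def using cInf_lessD[OF S_ne] unfolding Sset_def by blast


lemma pf_pair:
  assumes n1: "0 < n1" and l1: "natmul n1 x + natmul j1 u \<le> natmul k1 u"
    and n2: "0 < n2" and l2: "natmul n2 y + natmul j2 u \<le> natmul k2 u"
  shows "pf (x+y) \<le> (real k1 - real j1) / real n1 + (real k2 - real j2) / real n2"
proof -
  have e1: "natmul (n1*n2) (x+y) + natmul (n2*j1 + n1*j2) u
      = natmul n2 (natmul n1 x + natmul j1 u) + natmul n1 (natmul n2 y + natmul j2 u)"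
    by (simp add: natmul_add natmul_add_count natmul_mult[symmetric] algebra_simps)
  have e2: "natmul (n2*k1 + n1*k2) u = natmul n2 (natmul k1 u) + natmul n1 (natmul k2 u)"
    by (simp add: natmul_add_count natmul_mult)
  have "natmul (n1*n2) (x+y) + natmul (n2*j1 + n1*j2) u \<le> natmul (n2*k1 + n1*k2) u"
    unfolding e1 e2 by (intro add_mono natmul_mono l1 l2)
  then have "pf (x+y) \<le> (real (n2*k1 + n1*k2) - real (n2*j1 + n1*j2)) / real (n1*n2)"
    using n1 n2 by (intro pf_le) auto
  also have "\<dots> = (real k1 - real j1) / real n1 + (real k2 - real j2) / real n2"
    using n1 n2 by (simp add: field_simps)
  finally show ?thesis .
qed

lemma pf_subadd: "pf (x+y) \<le> pf x + pf y"
proof -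
  have "pf (x+y) - pf x \<le> (real k2 - real j2) / real n2"
    if n2: "0 < n2" and l2: "natmul n2 y + natmul j2 u \<le> natmul k2 u" for n2 j2 k2
  proof -
    have "pf (x+y) - (real k2 - real j2) / real n2 \<le> pf x"
    proof (rule pf_greatest)
      fix n j k assume "0 < n" "natmul n x + natmul j u \<le> natmul k u"
      from pf_pair[OF this n2 l2]
      show "pf (x+y) - (real k2 - real j2) / real n2 \<le> (real k - real j) / real n" by linarith
    qed
    then show ?thesis by linarith
  qed
  then have "pf (x+y) - pf x \<le> pf y" by (rule pf_greatest)
  then show ?thesis by linarith
qed

lemma pf_zero: "pf 0 = 0"
proof -
  have "pf 0 \<le> (real 0 - real 0) / real (1::nat)" by (rule pf_le) auto
  moreover have "0 \<le> pf 0"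
  proof (rule pf_greatest)
    fix n j k assume "0 < (n::nat)" "natmul n (0::'a) + natmul j u \<le> natmul k u"
    then have "j \<le> k" using cancel by simp
    then show "0 \<le> (real k - real j) / real n" by simp
  qed
  ultimately show ?thesis by simp
qed

lemma pf_hom: "pf (natmul m x) = real m * pf x"
proof (cases "m = 0")
  case True then show ?thesis by (simp add: pf_zero)
next
  case False
  then have m: "0 < m" by simp
  have "real m * pf x \<le> pf (natmul m x)"
  proof (rule pf_greatest)
    fix n j k assume n: "0 < n" and l: "natmul n (natmul m x) + natmul j u \<le> natmul k u"
    have "pf x \<le> (real k - real j) / real (n*m)"
      using n m l by (intro pf_le) (auto simp: natmul_mult)
    then show "real m * pf x \<le> (real k - real j) / real n"
      using m n by (simp add: le_divide_eq field_simps)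
  qed
  moreover have "pf (natmul m x) / real m \<le> pf x"
  proof (rule pf_greatest)
    fix n j k assume n: "0 < n" and l: "natmul n x + natmul j u \<le> natmul k u"
    have "natmul n (natmul m x) + natmul (m*j) u \<le> natmul (m*k) u"
      using natmul_mono[OF l, of m] by (simp add: natmul_add natmul_mult natmul_comm[of m n])
    then have "pf (natmul m x) \<le> (real (m*k) - real (m*j)) / real n"
      using n by (intro pf_le) auto
    then show "pf (natmul m x) / real m \<le> (real k - real j) / real n"
      using m n by (simp add: divide_le_eq field_simps)
  qed
  ultimately show ?thesis using m by (simp add: divide_le_eq mult.commute)
qed

lemma pf_subl: "subl pf"
  unfolding subl_def using pf_subadd pf_hom by blast

lemma dominated_state:
  assumes add: "\<forall>x y. f (x+y) = f x + f y" and dom: "\<forall>y. f y \<le> pf y"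
  shows "f \<in> states u"
proof -
  have "pf u \<le> 1" using pf_le[of 1 u 0 1] by simp
  then have f1: "f u \<le> 1" using dom order_trans by blast
  have "pf (-u) \<le> -1" using pf_le[of 1 "-u" 1 0] by simp
  then have f2: "f (-u) \<le> -1" using dom order_trans by blast
  have fu: "f u = 1" using f1 f2 additive_minus[OF add, of u] by simp
  have "0 \<le> f g" if "0 \<le> g" for g
  proof -
    have "pf (-g) \<le> 0" using that pf_le[of 1 "-g" 0 0] by simp
    then have "f (-g) \<le> 0" using dom order_trans by blast
    then show ?thesis using additive_minus[OF add, of g] by simp
  qed
  then show ?thesis unfolding states_def using add fu by blast
qed

lemma pf_small:
  assumes P: "0 < P" and Q: "0 < Q" and lt: "pf g < real P / real Q"
  shows "natmul Q g \<le> natmul P u"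
proof -
  obtain n j k where n: "0 < n" and l: "natmul n g + natmul j u \<le> natmul k u"
    and s: "(real k - real j) / real n < real P / real Q"
    using pf_less[OF lt] by blast
  have "(real k - real j) * real Q < real P * real n"
    using s n Q by (simp add: divide_less_eq less_divide_eq field_simps)
  then have "real (Q*k) < real (P*n + Q*j)" by (simp add: algebra_simps)
  then have kk: "Q*k \<le> P*n + Q*j" by linarith
  have "natmul (Q*n) g + natmul (Q*j) u \<le> natmul (Q*k) u"
    using natmul_mono[OF l, of Q] by (simp add: natmul_add natmul_mult)
  also have "\<dots> \<le> natmul (P*n + Q*j) u" by (rule natmul_mono_count[OF u_nonneg kk])
  also have "\<dots> = natmul (P*n) u + natmul (Q*j) u" by (simp add: natmul_add_count)
  finally have "natmul (Q*n) g \<le> natmul (P*n) u" by simp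
  then have "0 \<le> natmul n (natmul P u - natmul Q g)"
    by (simp add: natmul_diff natmul_mult natmul_comm[of _ n])
  then have "0 \<le> natmul P u - natmul Q g" using unp_rule n by blast
  then show ?thesis by simp
qed

lemma nonInf_state:
  assumes c: "countable (UNIV :: 'a set)" and g: "g \<notin> infinitesimals u"
  shows "\<exists>\<sigma>\<in>states u. \<sigma> g \<noteq> 0"
proof -
  have "\<exists>P Q::nat. 0 < P \<and> 0 < Q \<and> (\<not> (- natmul P u \<le> natmul Q g) \<or> \<not> (natmul Q g \<le> natmul P u))"
    using g unfolding infinitesimals_def by auto
  then obtain P Q :: nat where P: "0 < P" and Q: "0 < Q"
    and h: "\<not> (- natmul P u \<le> natmul Q g) \<or> \<not> (natmul Q g \<le> natmul P u)"
    by blast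
  have pos: "0 < real P / real Q" using P Q by simp
  show ?thesis
  proof (cases "natmul Q g \<le> natmul P u")
    case False
    then have "\<not> pf g < real P / real Q" using pf_small[OF P Q, of g] by blast
    then have "real P / real Q \<le> pf g" by linarith
    obtain \<sigma> where a: "\<forall>x y. \<sigma> (x+y) = \<sigma> x + \<sigma> y" and d: "\<forall>y. \<sigma> y \<le> pf y" and e: "\<sigma> g = pf g"
      using HB[OF pf_subl c, of g] by blast
    have "\<sigma> g > 0" using e pos \<open>real P / real Q \<le> pf g\<close> by linarith
    then show ?thesis using dominated_state[OF a d] by (intro bexI[of _ \<sigma>]) auto
  next
    case True
    then have "\<not> (- natmul P u \<le> natmul Q g)" using h by blast
    moreover have "natmul Q (-g) \<le> natmul P u \<longleftrightarrow> - natmul P u \<le> natmul Q g"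
      by (simp only: natmul_minus minus_le_iff)
    ultimately have "\<not> (natmul Q (-g) \<le> natmul P u)" by blast
    then have "\<not> pf (-g) < real P / real Q" using pf_small[OF P Q, of "-g"] by blast
    then have "real P / real Q \<le> pf (-g)" by linarith
    obtain \<sigma> where a: "\<forall>x y. \<sigma> (x+y) = \<sigma> x + \<sigma> y" and d: "\<forall>y. \<sigma> y \<le> pf y" and e: "\<sigma> (-g) = pf (-g)"
      using HB[OF pf_subl c, of "-g"] by blast
    have "\<sigma> (-g) > 0" using e pos \<open>real P / real Q \<le> pf (-g)\<close> by linarith
    then have "\<sigma> g \<noteq> 0" using additive_minus[OF a, of g] by simp
    then show ?thesis using dominated_state[OF a d] by (intro bexI[of _ \<sigma>]) auto
  qed
qed

end



lemma state_add: "\<tau> \<in> states u \<Longrightarrow> \<forall>x y. \<tau> (x+y) = \<tau> x + \<tau> y"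
  by (simp add: states_def)

lemma state_diff: "\<tau> \<in> states u \<Longrightarrow> \<tau> (a - b) = \<tau> a - \<tau> b"
proof -
  assume s: "\<tau> \<in> states u"
  have "\<tau> (a + - b) = \<tau> a + \<tau> (-b)" using state_add[OF s] by blast
  then show ?thesis using additive_minus[OF state_add[OF s], of b] by simp
qed

lemma state_natmul_u: "\<tau> \<in> states u \<Longrightarrow> \<tau> (natmul n u) = real n"
  using additive_natmul[OF state_add, of \<tau> u n u] by (simp add: states_def)

lemma state_bound:
  assumes s: "\<tau> \<in> states u" and h: "natmul n u - g \<ge> 0"
  shows "\<tau> g \<le> real n"
proof -
  have "0 \<le> \<tau> (natmul n u - g)" using s h by (simp add: states_def)
  then show ?thesis using state_diff[OF s] state_natmul_u[OF s] by simp
qed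

lemma states_Inf:
  assumes s: "\<tau> \<in> states u" and g: "g \<in> infinitesimals u"
  shows "\<tau> g = 0"
proof (rule ccontr)
  assume nz: "\<tau> g \<noteq> 0"
  obtain Q :: nat where Q: "1 / \<bar>\<tau> g\<bar> < real Q" using reals_Archimedean2 by blast
  then have Qp: "0 < Q" using nz by (metis divide_pos_pos less_trans of_nat_0_less_iff zero_less_abs_iff zero_less_one)
  have "- natmul 1 u \<le> natmul Q g \<and> natmul Q g \<le> natmul 1 u"
    using g Qp unfolding infinitesimals_def by blast
  then have le1: "natmul Q g \<le> u" and le2: "- u \<le> natmul Q g" by auto
  have tQ: "\<tau> (natmul Q g) = real Q * \<tau> g" using additive_natmul[OF state_add[OF s]] .
  have pos: "0 \<le> h \<Longrightarrow> 0 \<le> \<tau> h" for h using s unfolding states_def by blast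
  have tu: "\<tau> u = 1" using s unfolding states_def by blast
  have "\<tau> (u - natmul Q g) \<ge> 0" using le1 by (intro pos) simp
  then have a: "real Q * \<tau> g \<le> 1" using state_diff[OF s, of u "natmul Q g"] tQ tu by simp
  have "\<tau> (natmul Q g - (-u)) \<ge> 0" using le2 by (intro pos) (simp only: diff_ge_0_iff_ge)
  then have b: "-1 \<le> real Q * \<tau> g" using state_diff[OF s, of "natmul Q g" "-u"] tQ tu additive_minus[OF state_add[OF s], of u]
    by simp
  have "real Q * \<bar>\<tau> g\<bar> \<le> 1" using a b by (simp add: abs_le_iff abs_mult)
  moreover have "1 < real Q * \<bar>\<tau> g\<bar>" using Q nz by (simp add: divide_less_eq mult.commute)
  ultimately show False by simp
qed

lemma states_compact:
  assumes ou: "order_unit u"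
  shows "compactin (powertop_real UNIV) (states u)"
proof -
  obtain N where N: "\<And>g. 0 < N g \<and> natmul (N g) u - g \<ge> 0"
    using ou unfolding order_unit_def by metis
  define K where "K = PiE UNIV (\<lambda>g. {- real (N (-g)) .. real (N g)})"
  have cK: "compactin (powertop_real UNIV) K"
    unfolding K_def by (simp add: compactin_PiE)
  have sub: "states u \<subseteq> K"
  proof
    fix \<tau> assume s: "\<tau> \<in> states u"
    have "\<tau> g \<in> {- real (N (-g)) .. real (N g)}" for g
    proof -
      have "\<tau> g \<le> real (N g)" using state_bound[OF s] N by blast
      moreover have "\<tau> (-g) \<le> real (N (-g))" using state_bound[OF s] N by blast
      ultimately show ?thesis using additive_minus[OF state_add[OF s], of g] by simp
    qed
    then show "\<tau> \<in> K" unfolding K_def by (simp add: PiE_iff)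
  qed
  let ?P = "powertop_real (UNIV::'a set)"
  have proj: "continuous_map ?P euclideanreal (\<lambda>\<tau>. \<tau> x)" for x
    using continuous_map_product_projection[of x UNIV "\<lambda>_. euclideanreal"] by simp
  define C1 where "C1 = (\<lambda>(x,y). {\<tau> \<in> topspace ?P. (\<lambda>\<tau>. \<tau> (x+y) - \<tau> x - \<tau> y) \<tau> \<in> {0}})"
  define C2 where "C2 = (\<lambda>g. {\<tau> \<in> topspace ?P. (\<lambda>\<tau>. \<tau> g) \<tau> \<in> {0..}})"
  define C3 where "C3 = {\<tau> \<in> topspace ?P. (\<lambda>\<tau>. \<tau> u) \<tau> \<in> {1}}"
  have c1: "closedin ?P (C1 p)" for p
  proof -
    obtain x y where p: "p = (x,y)" by (cases p)
    show ?thesis unfolding C1_def p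
      by (simp only: case_prod_conv, rule closedin_continuous_map_preimage[where Y=euclideanreal])
        (auto intro!: continuous_map_diff proj simp: closed_closedin[symmetric])
  qed
  have c2: "closedin ?P (C2 g)" for g
    unfolding C2_def by (rule closedin_continuous_map_preimage[where Y=euclideanreal]) (auto intro: proj simp: closed_closedin[symmetric])
  have c3: "closedin ?P C3"
    unfolding C3_def by (rule closedin_continuous_map_preimage[where Y=euclideanreal]) (auto intro: proj simp: closed_closedin[symmetric])
  have eq: "states u = \<Inter> (insert C3 (range C1 \<union> C2 ` {g. 0 \<le> g}))"
  proof (intro equalityI subsetI)
    fix \<tau> assume "\<tau> \<in> states u" then show "\<tau> \<in> \<Inter> (insert C3 (range C1 \<union> C2 ` {g. 0 \<le> g}))"
      unfolding states_def C1_def C2_def C3_def by auto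
  next
    fix \<tau> assume h: "\<tau> \<in> \<Inter> (insert C3 (range C1 \<union> C2 ` {g. 0 \<le> g}))"
    have "\<tau> \<in> C1 (x,y)" for x y using h by blast
    then have "\<tau> (x+y) - \<tau> x - \<tau> y = 0" for x y by (simp add: C1_def)
    then have a: "\<tau> (x+y) = \<tau> x + \<tau> y" for x y by (metis diff_diff_eq eq_iff_diff_eq_0)
    have "0 \<le> g \<Longrightarrow> \<tau> \<in> C2 g" for g using h by blast
    then have b: "0 \<le> g \<Longrightarrow> 0 \<le> \<tau> g" for g by (simp add: C2_def)
    have "\<tau> \<in> C3" using h by blast
    then have c: "\<tau> u = 1" by (simp add: C3_def)
    show "\<tau> \<in> states u" unfolding states_def using a b c by blast
  qed
  have "closedin ?P (states u)"
    unfolding eq by (rule closedin_Inter) (use c1 c2 c3 in auto)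
  then show ?thesis using closed_compactin[OF cK sub] by blast
qed


lemma states_convex:
  assumes s: "\<tau> \<in> states u" and s': "\<sigma> \<in> states u" and t: "0 \<le> t" "t \<le> 1"
  shows "(\<lambda>h. (1-t) * \<tau> h + t * \<sigma> h) \<in> states u"
proof -
  have a: "\<forall>x y. \<tau> (x+y) = \<tau> x + \<tau> y" "\<forall>x y. \<sigma> (x+y) = \<sigma> x + \<sigma> y"
    using s s' by (auto simp: states_def)
  have p: "0 \<le> g \<Longrightarrow> 0 \<le> \<tau> g \<and> 0 \<le> \<sigma> g" for g using s s' by (auto simp: states_def)
  have u: "\<tau> u = 1" "\<sigma> u = 1" using s s' by (auto simp: states_def)
  have "0 \<le> (1-t) * \<tau> g + t * \<sigma> g" if "0 \<le> g" for g
    using p[OF that] t by (intro add_nonneg_nonneg mult_nonneg_nonneg) auto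
  moreover have "(1-t) * \<tau> (x+y) + t * \<sigma> (x+y) = ((1-t) * \<tau> x + t * \<sigma> x) + ((1-t) * \<tau> y + t * \<sigma> y)" for x y
    using a by (simp add: algebra_simps)
  moreover have "(1-t) * \<tau> u + t * \<sigma> u = 1" using u by simp
  ultimately show ?thesis unfolding states_def by blast
qed

lemma dense_U:
  fixes u :: "'a::ordered_ab_group_add"
  assumes s': "\<sigma> \<in> states u" and sg: "\<sigma> g \<noteq> 0"
  shows "(subtopology (powertop_real UNIV) (states u)) closure_of {\<tau> \<in> states u. \<tau> g \<noteq> 0}
       = topspace (subtopology (powertop_real UNIV) (states u))"
proof -
  let ?X = "subtopology (powertop_real (UNIV::'a set)) (states u)"
  have tX: "topspace ?X = states u" by simp
  have "\<tau> \<in> ?X closure_of {\<tau> \<in> states u. \<tau> g \<noteq> 0}" if s: "\<tau> \<in> states u" for \<tau>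
    unfolding in_closure_of
  proof (intro conjI allI impI)
    show "\<tau> \<in> topspace ?X" using s by simp
    fix W assume "\<tau> \<in> W \<and> openin ?X W"
    then have tW: "\<tau> \<in> W" and W: "openin ?X W" by auto
    show "\<exists>y. y \<in> {\<tau> \<in> states u. \<tau> g \<noteq> 0} \<and> y \<in> W"
    proof (cases "\<tau> g = 0")
      case False then show ?thesis using s tW by blast
    next
      case True
      define \<gamma> where "\<gamma> t = (\<lambda>h. (1-t) * \<tau> h + t * \<sigma> h)" for t :: real
      have cP: "continuous_map euclideanreal (powertop_real UNIV) \<gamma>"
        unfolding continuous_map_componentwise_UNIV \<gamma>_def
        by (simp add: continuous_intros)
      have gs: "\<gamma> t \<in> states u" if "t \<in> {0..1}" for t
        unfolding \<gamma>_def using states_convex[OF s s'] that by simp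
      have cX: "continuous_map (top_of_set {0..1}) ?X \<gamma>"
        by (rule continuous_map_into_subtopology[OF continuous_map_from_subtopology[OF cP]])
          (use gs in \<open>simp add: Pi_iff\<close>)
      have "openin (top_of_set {0..1}) {t \<in> {0..1}. \<gamma> t \<in> W}"
        using openin_continuous_map_preimage[OF cX W] by simp
      then obtain V where V: "open V" and Veq: "{t \<in> {0..1}. \<gamma> t \<in> W} = {0..1} \<inter> V"
        unfolding openin_open by blast
      have g0: "\<gamma> 0 = \<tau>" by (simp add: \<gamma>_def)
      have "(0::real) \<in> {t \<in> {0..1}. \<gamma> t \<in> W}" using tW g0 by simp
      then have "0 \<in> V" using Veq by blast
      then obtain e where e: "e > 0" and ball: "ball 0 e \<subseteq> V" using V openE by blast
      define t where "t = min (e/2) (1/2)"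
      have t: "0 < t" "t \<le> 1" "t < e" using e by (auto simp: t_def)
      have "t \<in> ball 0 e" using t by (simp add: dist_real_def)
      then have "t \<in> {0..1} \<inter> V" using ball t by auto
      then have "t \<in> {t \<in> {0..1}. \<gamma> t \<in> W}" using Veq by blast
      then have "\<gamma> t \<in> W" by blast
      moreover have "\<gamma> t \<in> states u" using gs t by simp
      moreover have "\<gamma> t g \<noteq> 0" using True t sg by (simp add: \<gamma>_def)
      ultimately show ?thesis by blast
    qed
  qed
  then have "topspace ?X \<subseteq> ?X closure_of {\<tau> \<in> states u. \<tau> g \<noteq> 0}" using tX by blast
  then show ?thesis by (rule subset_antisym[OF closure_of_subset_topspace])
qed

theorem mainTheorem9:
  fixes u :: "'a::ordered_ab_group_add"
  assumes "countable (UNIV :: 'a set)"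
    and "unperforated TYPE('a)"
    and "order_unit u"
  defines "X \<equiv> subtopology (powertop_real (UNIV :: 'a set)) (states u)"
    and "D \<equiv> {\<tau> \<in> states u. {g. \<tau> g = 0} = infinitesimals u}"
  shows "gdelta_in X D \<and> X closure_of D = topspace X"
proof (cases "u = 0")
  case True
  have "states u = {}"
  proof -
    have "\<tau> \<notin> states u" for \<tau>
    proof
      assume s: "\<tau> \<in> states u"
      have "\<tau> 0 = 0" using state_add[OF s, rule_format, of 0 0] by simp
      then show False using s True by (simp add: states_def)
    qed
    then show ?thesis by blast
  qed
  then have "D = {}" "topspace X = {}" by (auto simp: D_def X_def)
  then show ?thesis by simp
next
  case False
  interpret pog u using assms(2,3) False by unfold_locales
  have tX: "topspace X = states u" by (simp add: X_def)
  define U where "U g = {\<tau> \<in> states u. \<tau> g \<noteq> 0}" for g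
  define T where "T = insert (states u) (U ` (- infinitesimals u))"
  have DT: "D = \<Inter> T"
  proof (intro equalityI subsetI)
    fix \<tau> assume "\<tau> \<in> D"
    then show "\<tau> \<in> \<Inter> T" unfolding D_def T_def U_def by auto
  next
    fix \<tau> assume h: "\<tau> \<in> \<Inter> T"
    then have s: "\<tau> \<in> states u" unfolding T_def by blast
    have "\<tau> g \<noteq> 0" if "g \<notin> infinitesimals u" for g using h that unfolding T_def U_def by blast
    moreover have "\<tau> g = 0" if "g \<in> infinitesimals u" for g using states_Inf[OF s that] .
    ultimately have "{g. \<tau> g = 0} = infinitesimals u" by blast
    then show "\<tau> \<in> D" using s unfolding D_def by blast
  qed
  have openU: "openin X (U g)" for g
  proof -
    have c: "continuous_map X euclideanreal (\<lambda>\<tau>. \<tau> g)"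
      unfolding X_def
      by (rule continuous_map_from_subtopology)
        (use continuous_map_product_projection[of g UNIV "\<lambda>_. euclideanreal"] in simp)
    have "openin X {\<tau> \<in> topspace X. \<tau> g \<in> - {0}}"
      by (rule openin_continuous_map_preimage[OF c]) (simp add: open_openin[symmetric] open_Compl)
    then show ?thesis by (simp add: U_def tX)
  qed
  have openT: "openin X S" if "S \<in> T" for S
    using that openU tX unfolding T_def by (auto simp: openin_topspace[of X, unfolded tX])
  have "countable (- infinitesimals u)" by (rule countable_subset[OF _ assms(1)]) auto
  then have cT: "countable T" unfolding T_def by simp
  have gd: "gdelta_in X D"
    unfolding DT by (rule gdelta_in_Inter[OF cT]) (auto simp: T_def intro!: open_imp_gdelta_in openT)
  have cpt: "compact_space X"
    unfolding X_def by (rule compact_space_subtopology[OF states_compact[OF assms(3)]])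
  have hd: "Hausdorff_space X"
    unfolding X_def by (rule Hausdorff_space_subtopology) (simp add: Hausdorff_space_product_topology)
  have "X closure_of \<Inter> T = topspace X"
  proof (rule Baire_category)
    show "completely_metrizable_space X \<or> locally_compact_space X \<and> regular_space X"
      using cpt hd compact_imp_locally_compact_space compact_Hausdorff_imp_regular_space by blast
    show "countable T" by (rule cT)
    fix S assume S: "S \<in> T"
    show "openin X S \<and> X closure_of S = topspace X"
    proof
      show "openin X S" using openT[OF S] .
      show "X closure_of S = topspace X"
      proof (cases "S = states u")
        case True then show ?thesis using closure_of_topspace[of X] unfolding tX by simp
      next
        case False
        then obtain g where g: "g \<notin> infinitesimals u" and Sg: "S = U g" using S unfolding T_def by auto
        obtain \<sigma> where "\<sigma> \<in> states u" "\<sigma> g \<noteq> 0" using nonInf_state[OF assms(1) g] by blast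
        from dense_U[OF this] show ?thesis unfolding Sg U_def X_def .
      qed
    qed
  qed
  then show ?thesis using gd DT by simp
qed


end
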